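(* There exists a constant $C'>0$ such that $|\varrho_N(x)|<1/x^2$ for all sufficiently large positive integers $N$ and all $x\in\left[N,\exp\!\left(C'(\log N)^2\right)\right]$.
   Context: For a positive integer $N$ and real $x$, $\varrho_N(x):=\prod_{n=1}^N\cos(\pi x/n)$. *)

theory Defs
  imports Complex_Main
begin

definition rho :: "nat \<Rightarrow> real \<Rightarrow> real" where
  "rho N x = (\<Prod>n=1..N. cos (pi * x / real n))"

end

theory Submission
  imports Defs "HOL-Real_Asymp.Real_Asymp"
begin

lemma asym1: "\<forall>\<^sub>F N in sequentially. real N \<ge> (4::real)" by real_asymp

lemma asym2: "\<forall>\<^sub>F N in sequentially. ln (real N)/50 + 1 \<le> sqrt (real N)" by real_asymp

lemma asym3a: "eventually (\<lambda>N::nat. ln (real N)^2/50 < (1 / (256 * real N powr (1/25))) * (sqrt (real N) / (4 * (ln (real N)/50+2)^2) - 1)) sequentially"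
  by real_asymp

lemma asym3b: "eventually (\<lambda>N::nat. 1 < sqrt (real N) / (4 * (ln (real N)/50+2)^2)) sequentially"
  by real_asymp

lemma asym3: "eventually (\<lambda>N::nat. ln (real N)^2/50 < (1 / 4 powr (ln (real N)/50+4)) * (sqrt (real N) / (4 * (ln (real N)/50+2)^2) - 1)) sequentially"
  using asym3a asym3b asym1
proof eventually_elim
  case (elim N)
  define L where "L = ln (real N)"
  define X where "X = sqrt (real N) / (4 * (L/50+2)^2) - 1"
  have X0: "X > 0" using elim(2) unfolding X_def L_def by simp
  have N0: "real N > 0" using elim(3) by simp
  have L0: "L \<ge> 0" unfolding L_def using elim(3) by simp
  have l4: "ln (4::real) \<le> 2"
  proof -
    have "ln (4::real) = ln (2 * 2)" by simp
    also have "\<dots> = ln 2 + ln 2" by (subst ln_mult) auto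
    finally show ?thesis using ln_2_less_1 by simp
  qed
  have "4 powr (L/50+4) = 4 powr (L/50) * 4 powr 4" by (simp add: powr_add)
  also have "4 powr (4::real) = 256" by (simp add: powr_numeral)
  also have "4 powr (L/50) = exp (L/50 * ln 4)" by (simp add: powr_def mult.commute)
  also have "exp (L/50 * ln 4) \<le> exp (1/25 * L)"
    using l4 L0 by (simp add: mult_left_mono[OF l4 L0, simplified])
  also have "exp (1/25 * L) = real N powr (1/25)" unfolding L_def using N0 by (simp add: powr_def)
  finally have "4 powr (L/50+4) \<le> real N powr (1/25) * 256" by simp
  then have "1 / (256 * real N powr (1/25)) \<le> 1 / 4 powr (L/50+4)"
    using N0 by (intro divide_left_mono) (auto simp: mult.commute intro!: mult_pos_pos)
  then have "(1 / (256 * real N powr (1/25))) * X \<le> (1 / 4 powr (L/50+4)) * X"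
    using X0 by (intro mult_right_mono) auto
  then show ?case using elim(1) unfolding X_def L_def by linarith
qed


fun dd :: "nat \<Rightarrow> (nat \<Rightarrow> real) \<Rightarrow> nat \<Rightarrow> real" where
  "dd 0 f n = f n"
| "dd (Suc k) f n = dd k f n - dd k f (Suc n)"

lemma dd_inv:
  assumes "n \<ge> 1"
  shows "dd k (\<lambda>m. x / real m) n = x * fact k / pochhammer (real n) (Suc k)"
  using assms
proof (induction k arbitrary: n)
  case 0
  then show ?case by simp
next
  case (Suc k)
  define Q where "Q = pochhammer (real n + 1) k"
  have Qpos: "Q > 0" unfolding Q_def using Suc.prems by (simp add: pochhammer_pos)
  have p1: "pochhammer (real n) (Suc k) = real n * Q"
    unfolding Q_def by (simp add: pochhammer_rec)
  have p2: "pochhammer (real (Suc n)) (Suc k) = Q * (real n + 1 + real k)"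
    unfolding Q_def using pochhammer_Suc[of "real n + 1" k] by (simp add: add.commute)
  have p3: "pochhammer (real n) (Suc (Suc k)) = real n * Q * (real n + 1 + real k)"
    using pochhammer_Suc[of "real n" "Suc k"] p1 by (simp add: add.commute add.left_commute)
  have "dd (Suc k) (\<lambda>m. x / real m) n = x * fact k / (real n * Q) - x * fact k / (Q * (real n + 1 + real k))"
    using Suc by (simp add: p1 p2 del: of_nat_Suc)
  also have "\<dots> = x * fact (Suc k) / (real n * Q * (real n + 1 + real k))"
  proof -
    define R where "R = real n + 1 + real k"
    define F :: real where "F = fact k"
    have "R > 0" unfolding R_def by simp
    moreover have "real n > 0" using Suc.prems by simp
    ultimately have "x * F / (real n * Q) - x * F / (Q * R) = x * F * (R - real n) / (real n * Q * R)"
      using Qpos by (simp add: field_simps)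
    moreover have "R - real n = real (Suc k)" unfolding R_def by simp
    moreover have "fact (Suc k) = real (Suc k) * F" unfolding F_def by (simp add: fact_Suc)
    ultimately show ?thesis unfolding R_def[symmetric] F_def[symmetric] by (simp add: ac_simps)
  qed
  finally show ?case by (simp only: p3)
qed

lemma dd_near:
  fixes f :: "nat \<Rightarrow> real" and d :: real
  assumes "\<forall>j\<le>k. \<exists>z::int. \<bar>f (n + j) - of_int z\<bar> \<le> d"
  shows "\<exists>z::int. \<bar>dd k f n - of_int z\<bar> \<le> 2^k * d"
  using assms
proof (induction k arbitrary: n)
  case 0
  then show ?case by simp
next
  case (Suc k)
  have "\<forall>j\<le>k. \<exists>z::int. \<bar>f (n + j) - of_int z\<bar> \<le> d" using Suc.prems by auto
  then obtain z1 :: int where z1: "\<bar>dd k f n - z1\<bar> \<le> 2^k * d" using Suc.IH by blast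
  have "\<forall>j\<le>k. \<exists>z::int. \<bar>f (Suc n + j) - of_int z\<bar> \<le> d" using Suc.prems
    by (metis Suc_le_mono add_Suc_shift add_Suc)
  then obtain z2 :: int where z2: "\<bar>dd k f (Suc n) - z2\<bar> \<le> 2^k * d" using Suc.IH by blast
  have "\<bar>dd (Suc k) f n - of_int (z1 - z2)\<bar> \<le> 2^(Suc k) * d"
    using z1 z2 by (simp add: abs_le_iff)
  then show ?case by blast
qed

lemma cos_far:
  fixes t d :: real
  assumes "\<forall>z::int. \<bar>t - z\<bar> > d" "0 \<le> d" 
  shows "\<bar>cos (pi * t)\<bar> \<le> cos (pi * d)"
proof -
  define m where "m = round t"
  define e where "e = t - m"
  have e1: "\<bar>e\<bar> \<le> 1/2" unfolding e_def m_def using of_int_round_abs_le[of t] by (simp add: abs_minus_commute)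
  have e2: "\<bar>e\<bar> > d" unfolding e_def using assms(1) by auto
  have "cos (pi * t) = cos (pi * of_int m + pi * e)" unfolding e_def by (simp add: algebra_simps)
  also have "\<dots> = (if even m then 1 else -1) * cos (pi * e)"
    by (simp add: cos_add)
  finally have "\<bar>cos (pi * t)\<bar> = \<bar>cos (pi * e)\<bar>" by simp
  also have "\<dots> = cos (pi * \<bar>e\<bar>)"
  proof -
    have "cos (pi * e) = cos (pi * \<bar>e\<bar>)" by (metis abs_mult abs_of_nonneg cos_abs_real pi_ge_zero)
    moreover have "cos (pi * \<bar>e\<bar>) \<ge> 0"
    proof (rule cos_ge_zero)
      have "pi * \<bar>e\<bar> \<ge> 0" by simp
      then show "- (pi / 2) \<le> pi * \<bar>e\<bar>" using pi_gt_zero by linarith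
      show "pi * \<bar>e\<bar> \<le> pi / 2" using e1 pi_gt_zero by (simp add: field_simps)
    qed
    ultimately show ?thesis by simp
  qed
  also have "\<dots> \<le> cos (pi * d)"
    using e1 e2 assms(2) by (intro cos_monotone_0_pi_le) auto
  finally show ?thesis .
qed

lemma cos_upper:
  fixes y :: real
  shows "cos y \<le> 1 - y^2/2 + y^4/24"
proof -
  obtain t where t: "cos y = (\<Sum>m<4. cos_coeff m * y ^ m) + (cos(t + 1/2 * real 4 * pi) / fact 4) * y ^ 4"
    using Maclaurin_cos_expansion[of y 4] by blast
  have e: "(\<Sum>m<4. g m) = g 0 + g 1 + g 2 + g 3" for g :: "nat \<Rightarrow> real"
    by (simp add: numeral_eq_Suc lessThan_Suc)
  have c3: "cos_coeff 3 = 0" "cos_coeff 1 = 0" "cos_coeff (Suc 0) = 0" "cos_coeff 2 = -1/2"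
    by (simp_all add: cos_coeff_def fact_numeral)
  have s: "(\<Sum>m<4. cos_coeff m * y ^ m) = 1 - y^2/2"
    by (simp add: e c3)
  have "(cos(t + 1/2 * real 4 * pi) / fact 4) * y ^ 4 \<le> y^4/24"
  proof -
    have "cos(t + 1/2 * real 4 * pi) \<le> 1" by simp
    moreover have "y^4 \<ge> 0" by simp
    ultimately show ?thesis using mult_right_mono[of "cos t" 1 "y^4"] by (simp add: fact_numeral)
  qed
  then show ?thesis using t s by simp
qed


lemma poch_bounds:
  fixes n k :: nat
  shows "real n ^ Suc k \<le> pochhammer (real n) (Suc k)"
    and "pochhammer (real n) (Suc k) \<le> (real n + real k) ^ Suc k"
proof -
  have p: "pochhammer (real n) (Suc k) = (\<Prod>i<Suc k. real n + real i)"
    by (simp add: pochhammer_prod atLeast0LessThan)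
  have "(\<Prod>i<Suc k. real n) \<le> (\<Prod>i<Suc k. real n + real i)"
    by (intro prod_mono) auto
  then show "real n ^ Suc k \<le> pochhammer (real n) (Suc k)" by (simp add: p)
  have "(\<Prod>i<Suc k. real n + real i) \<le> (\<Prod>i<Suc k. real n + real k)"
    by (intro prod_mono) auto
  then show "pochhammer (real n) (Suc k) \<le> (real n + real k) ^ Suc k" by (simp add: p)
qed

lemma root2_lower:
  fixes k :: nat
  shows "1 + 1 / (2 * real (Suc k)) \<le> root (Suc k) 2"
proof -
  have "(1 + 1 / (2 * real (Suc k))) ^ Suc k \<le> exp (1 / (2 * real (Suc k))) ^ Suc k"
    by (intro power_mono) (auto simp: add.commute exp_ge_add_one_self)
  also have "\<dots> = exp (real (Suc k) * (1 / (2 * real (Suc k))))" by (simp only: exp_of_nat_mult)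
  also have "\<dots> = exp (1/2)" by (simp del: of_nat_Suc)
  also have "\<dots> \<le> 2"
  proof -
    have "exp (1/2::real) ^ 2 = exp 1" by (simp add: exp_of_nat_mult[symmetric])
    also have "\<dots> \<le> 2^2" using exp_le by simp
    finally show ?thesis by (rule power2_le_imp_le) simp
  qed
  finally have "(1 + 1 / (2 * real (Suc k))) ^ Suc k \<le> 2" .
  also have "2 = root (Suc k) 2 ^ Suc k" using real_root_pow_pos2[of "Suc k" 2] by (simp only: zero_less_Suc)
  finally show ?thesis
    by (rule power_le_imp_le_base) simp
qed


lemma main_bound:
  fixes N :: nat and x :: real
  defines "L \<equiv> ln (real N)"
  assumes N4: "real N \<ge> 4"
    and H2: "L/50 + 1 \<le> sqrt (real N)"
    and H3: "L^2/50 < (1 / 4 powr (L/50+4)) * (sqrt (real N) / (4 * (L/50+2)^2) - 1)"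
    and xl: "real N \<le> x" and xu: "x \<le> exp (1/100 * L^2)"
  shows "\<bar>rho N x\<bar> < 1 / x^2"
proof -
  define s where "s = sqrt (real N)"
  define K where "K = L/50 + 1"
  have Npos: "real N > 0" using N4 by simp
  have xpos: "x > 0" using xl Npos by simp
  have Lpos: "L \<ge> ln 4" unfolding L_def using N4 by simp
  have "ln (4::real) > 0" by simp
  then have L0: "L > 0" using Lpos by linarith
  have s0: "s > 0" unfolding s_def using Npos by simp
  have s1: "s \<ge> 1" unfolding s_def using N4 by simp
  have ss: "s^2 = real N" unfolding s_def using Npos by simp
  have sexp: "s = exp (L/2)"
  proof -
    have "s = real N powr (1/2)" unfolding s_def using Npos by (simp add: powr_half_sqrt)
    also have "\<dots> = exp (1/2 * ln (real N))" using Npos by (simp add: powr_def)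
    finally show ?thesis unfolding L_def by simp
  qed
  have "ln x \<le> ln (exp (1/100*L^2))" using xu xpos by (subst ln_le_cancel_iff) auto
  then have lnx: "ln x \<le> L^2/100" by simp
  define K1 where "K1 = nat \<lceil>L/50\<rceil>"
  have K1a: "real K1 \<ge> L/50" unfolding K1_def by linarith
  have K1b: "real K1 \<le> K" unfolding K1_def K_def using L0 by linarith
  have K1s: "real K1 \<le> s" using K1b H2 unfolding K_def s_def by linarith
  have exK1: "4 * fact K1 * x \<le> real N ^ Suc K1"
  proof -
    have "fact K1 \<le> real K1 ^ K1" using fact_le_power[of K1] by simp
    also have "\<dots> \<le> s ^ K1" using K1s by (intro power_mono) auto
    finally have f: "fact K1 \<le> s ^ K1" .
    have "x \<le> exp (1/100 * L^2)" by (rule xu)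
    also have "\<dots> \<le> exp (real K1 * (L/2))"
      using K1a L0 by (simp add: power2_eq_square)
    also have "\<dots> = s ^ K1" by (simp only: sexp exp_of_nat_mult[symmetric])
    finally have xs: "x \<le> s ^ K1" .
    have "4 * fact K1 * x \<le> 4 * s ^ K1 * x" using f xpos by simp
    also have "\<dots> \<le> real N * s ^ K1 * s ^ K1" using xs N4 s0 xpos
      by (intro mult_mono) auto
    also have "\<dots> = real N * (s^2) ^ K1" by (simp add: power_mult_distrib[symmetric] power2_eq_square)
    also have "\<dots> = real N ^ Suc K1" by (simp add: ss)
    finally show ?thesis .
  qed
  define k where "k = (LEAST k. 4 * fact k * x \<le> real N ^ Suc k)"
  have kprop: "4 * fact k * x \<le> real N ^ Suc k"
    unfolding k_def by (rule LeastI[of _ K1]) (rule exK1)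
  have kK1: "k \<le> K1" unfolding k_def by (rule Least_le) (rule exK1)
  have kK: "real k \<le> K" using kK1 K1b by simp
  have k0: "k \<noteq> 0"
  proof
    assume "k = 0"
    then have "4 * x \<le> real N" using kprop by simp
    then show False using xl xpos by simp
  qed
  then obtain k' where k': "k = Suc k'" by (cases k) auto
  have kfail: "\<not> (4 * fact k' * x \<le> real N ^ Suc k')"
    using not_less_Least[of k' "\<lambda>k. 4 * fact k * x \<le> real N ^ Suc k"] k' unfolding k_def by simp
  define F :: real where "F = fact k"
  have F0: "F > 0" unfolding F_def by simp
  define a where "a = root (Suc k) (2 * F * x)"
  define b where "b = root (Suc k) (4 * F * x)"
  have apow: "a ^ Suc k = 2 * F * x" unfolding a_def by (rule real_root_pow_pos2) (use F0 xpos in auto)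
  have bpow: "b ^ Suc k = 4 * F * x" unfolding b_def by (rule real_root_pow_pos2) (use F0 xpos in auto)
  have a0: "a > 0" unfolding a_def using F0 xpos by simp
  have b0: "b > 0" unfolding b_def using F0 xpos by simp
  have bN: "b \<le> real N"
  proof -
    have "b ^ Suc k \<le> real N ^ Suc k" using bpow kprop F_def by simp
    then show ?thesis by (rule power_le_imp_le_base) simp
  qed
  have ba: "b = a * root (Suc k) 2"
  proof -
    have "4 * F * x = (2 * F * x) * 2" by simp
    then have "b = root (Suc k) ((2 * F * x) * 2)" unfolding b_def by simp
    also have "\<dots> = a * root (Suc k) 2" unfolding a_def by (rule real_root_mult)
    finally show ?thesis .
  qed
  have as: "a \<ge> s / 2"
  proof -
    have "(s/2) ^ Suc k = s ^ Suc k / 2 ^ Suc k" by (simp add: power_divide)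
    also have "\<dots> \<le> s ^ Suc k / 2"
      by (rule divide_left_mono) (use s0 in \<open>auto simp: \<close>)
    also have "s ^ Suc k \<le> s ^ (2 * k)" using s1 k0 by (intro power_increasing) auto
    then have "s ^ Suc k / 2 \<le> s ^ (2*k) / 2" by simp
    also have "s ^ (2 * k) = real N ^ k" by (simp add: power_mult ss)
    also have "real N ^ k / 2 < 2 * fact k' * x" using kfail k' by simp
    also have "\<dots> \<le> 2 * F * x" unfolding F_def k' using xpos
      by (simp add: fact_Suc)
    finally have "(s/2) ^ Suc k \<le> a ^ Suc k" using apow by simp
    then show ?thesis by (rule power_le_imp_le_base) (use a0 in simp)
  qed
  have bma: "b - a \<ge> s / (4 * real (Suc k))"
  proof -
    have "b - a = a * (root (Suc k) 2 - 1)" using ba by (simp add: algebra_simps)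
    also have "\<dots> \<ge> a * (1 / (2 * real (Suc k)))"
      using root2_lower[of k] a0 by (intro mult_left_mono) auto
    finally have "b - a \<ge> a / (2 * real (Suc k))" by simp
    moreover have "a / (2 * real (Suc k)) \<ge> (s/2) / (2 * real (Suc k))"
      using as by (intro divide_right_mono) auto
    ultimately show ?thesis by simp
  qed
  define A where "A = nat \<lceil>a\<rceil>"
  define B where "B = nat \<lfloor>b\<rfloor> - k"
  define I where "I = {A..B}"
  define D where "D = (\<lambda>n::nat. x * F / pochhammer (real n) (Suc k))"
  have Iprops: "1 \<le> n \<and> n + k \<le> N \<and> 1/4 \<le> D n \<and> D n \<le> 1/2" if "n \<in> I" for n
  proof -
    have nA: "A \<le> n" and nB: "n \<le> B" using that I_def by auto
    have "real A \<ge> a" unfolding A_def by linarith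
    then have na: "real n \<ge> a" using nA by linarith
    then have n1: "n \<ge> 1" using a0 by (cases n) auto
    then have "nat \<lfloor>b\<rfloor> \<ge> n + k" using nB unfolding B_def by linarith
    then have nkb: "real n + real k \<le> b" using b0 by linarith
    then have nkN: "n + k \<le> N" using bN by linarith
    have P0: "pochhammer (real n) (Suc k) > 0" using n1 by (simp add: pochhammer_pos)
    have "pochhammer (real n) (Suc k) \<ge> a ^ Suc k"
      using poch_bounds(1)[of n k] power_mono[OF na, of "Suc k"] a0 by linarith
    then have "pochhammer (real n) (Suc k) \<ge> 2 * F * x" using apow by simp
    then have D1: "D n \<le> 1/2" unfolding D_def using P0 F0 xpos by (simp add: field_simps)
    have "pochhammer (real n) (Suc k) \<le> b ^ Suc k"
      using poch_bounds(2)[of n k] power_mono[OF nkb, of "Suc k"] by simp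
    then have "pochhammer (real n) (Suc k) \<le> 4 * F * x" using bpow by simp
    then have D2: "D n \<ge> 1/4" unfolding D_def using P0 F0 xpos by (simp add: field_simps)
    show ?thesis using n1 nkN D1 D2 by simp
  qed
  define d :: real where "d = 1 / 2^(k+3)"
  have d0: "d > 0" unfolding d_def by simp
  define Bad where "Bad = {m \<in> {1..N}. \<forall>z::int. \<bar>x / real m - of_int z\<bar> > d}"
  have Bad_fin: "finite Bad" unfolding Bad_def by simp
  have cover: "\<exists>j\<le>k. n + j \<in> Bad" if "n \<in> I" for n
  proof (rule ccontr)
    assume neg: "\<not> (\<exists>j\<le>k. n + j \<in> Bad)"
    have Ip: "1 \<le> n" "n + k \<le> N" "1/4 \<le> D n" "D n \<le> 1/2" using Iprops[OF that] by auto
    have "\<forall>j\<le>k. \<exists>z::int. \<bar>(\<lambda>m. x / real m) (n + j) - of_int z\<bar> \<le> d"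
    proof (intro allI impI)
      fix j assume "j \<le> k"
      then have "n + j \<notin> Bad" "n + j \<in> {1..N}" using neg Ip by auto
      then show "\<exists>z::int. \<bar>(\<lambda>m. x / real m) (n + j) - of_int z\<bar> \<le> d"
        unfolding Bad_def by (auto simp: not_less)
    qed
    from dd_near[OF this] obtain z :: int where z: "\<bar>dd k (\<lambda>m. x / real m) n - of_int z\<bar> \<le> 2^k * d"
      by blast
    have "dd k (\<lambda>m. x / real m) n = D n" unfolding D_def F_def using dd_inv[OF Ip(1)] by simp
    moreover have "2^k * d = 1/8" unfolding d_def by (simp add: power_add)
    ultimately have z': "\<bar>D n - of_int z\<bar> \<le> 1/8" using z by simp
    show False
    proof (cases "z \<le> 0")
      case True
      then have "real_of_int z \<le> 0" by simp
      then show False using z' Ip by (simp add: abs_le_iff)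
    next
      case False
      then have "real_of_int z \<ge> 1" by simp
      then show False using z' Ip by (simp add: abs_le_iff)
    qed
  qed
  have Isub: "I \<subseteq> (\<Union>m\<in>Bad. {m - k..m})"
  proof
    fix n assume "n \<in> I"
    then obtain j where "j \<le> k" "n + j \<in> Bad" using cover by blast
    then show "n \<in> (\<Union>m\<in>Bad. {m - k..m})" by (intro UN_I[of "n+j"]) auto
  qed
  have cardI: "card I \<le> card Bad * Suc k"
  proof -
    have "card I \<le> card (\<Union>m\<in>Bad. {m - k..m})"
      using Isub Bad_fin by (intro card_mono) auto
    also have "\<dots> \<le> (\<Sum>m\<in>Bad. card {m - k..m})" by (rule card_UN_le[OF Bad_fin])
    also have "\<dots> \<le> (\<Sum>m\<in>Bad. Suc k)" by (intro sum_mono) auto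
    finally show ?thesis by simp
  qed
  have cardI2: "real (card I) \<ge> s / (4 * real (Suc k)) - real (Suc k)"
  proof -
    have "card I = Suc B - A" unfolding I_def by simp
    then have "real (card I) \<ge> real B + 1 - real A" by linarith
    moreover have "real B \<ge> b - 1 - real k" unfolding B_def using b0 by linarith
    moreover have "real A \<le> a + 1" unfolding A_def using a0 by linarith
    ultimately show ?thesis using bma by simp
  qed
  define m where "m = card Bad"
  have mbound: "real m \<ge> s / (4 * (K+1)^2) - 1"
  proof -
    have "real (card I) \<le> real m * real (Suc k)" using cardI unfolding m_def
      by (metis of_nat_le_iff of_nat_mult)
    then have "real m \<ge> real (card I) / real (Suc k)" by (simp add: field_simps)
    moreover have "real (card I) / real (Suc k) \<ge> s / (4 * real (Suc k)^2) - 1"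
    proof -
      define t where "t = real (Suc k)"
      have t0: "t > 0" unfolding t_def by simp
      have "s / (4 * t^2) - 1 = (s / (4 * t) - t) / t" using t0 by (simp add: field_simps power2_eq_square)
      also have "\<dots> \<le> real (card I) / t" using cardI2 t0 unfolding t_def[symmetric]
        by (intro divide_right_mono) auto
      finally show ?thesis unfolding t_def .
    qed
    moreover have "s / (4 * real (Suc k)^2) \<ge> s / (4 * (K+1)^2)"
      using kK s0 by (intro divide_left_mono mult_left_mono power_mono) auto
    ultimately show ?thesis by linarith
  qed
  define c where "c = cos (pi * d)"
  define e where "e = 1 / 4 powr (K + 3)"
  have d8: "d \<le> 1/8" unfolding d_def by (simp add: power_add)
  have c0: "c \<ge> 0" unfolding c_def
  proof (intro cos_ge_zero)
    have "pi * d > 0" using d0 by simp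
    then show "- (pi / 2) \<le> pi * d" using pi_gt_zero by linarith
    show "pi * d \<le> pi / 2" using d8 d0 pi_gt_zero by (simp add: field_simps)
  qed
  have ce: "c \<le> 1 - e"
  proof -
    have "pi * d \<le> 4 * (1/8)" using d8 pi_less_4 d0
      by (intro mult_mono) auto
    then have pd: "pi * d \<le> 1/2" by simp
    have pd0: "pi * d \<ge> 0" using d0 by simp
    have c1: "c \<le> 1 - (pi*d)^2/2 + (pi*d)^4/24" unfolding c_def by (rule cos_upper)
    have h: "(pi*d)^4 \<le> (pi*d)^2 * (1/2)^2"
    proof -
      have "(pi*d)^2 \<le> (1/2)^2" using power_mono[OF pd pd0, of 2] .
      then have "(pi*d)^2 * (pi*d)^2 \<le> (pi*d)^2 * (1/2)^2" by (intro mult_left_mono) auto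
      moreover have "(pi*d)^4 = (pi*d)^2 * (pi*d)^2" by (simp only: power4_eq_xxxx power2_eq_square mult.assoc)
      ultimately show ?thesis by (simp only:)
    qed
    have "((1::real)/2)^2 = 1/4" by (simp add: power_divide)
    with h have h2: "(pi*d)^4 \<le> (pi*d)^2 / 4" by simp
    have y2: "(pi*d)^2 \<ge> 0" by simp
    have c2: "c \<le> 1 - (pi*d)^2/4" using c1 h2 y2 by linarith
    have "(pi*d)^2/4 \<ge> d^2"
    proof -
      have "pi^2 \<ge> 2^2" using pi_ge_two by (intro power_mono) auto
      then have "pi^2 * d^2 \<ge> 4 * d^2" by (intro mult_right_mono) auto
      then show ?thesis by (simp add: power_mult_distrib)
    qed
    moreover have "d^2 \<ge> e"
    proof -
      have q1: "((2::real)^(k+3))^2 = (2^2)^(k+3)" by (simp only: power_mult[symmetric] mult.commute)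
      have q2: "(4::real) powr (real (k+3)) = 4^(k+3)" by (rule powr_realpow) simp
      have "d^2 = 1 / 4 powr (real k + 3)"
        unfolding d_def using q1 q2 by (simp add: power_divide)
      also have "\<dots> \<ge> 1 / 4 powr (K + 3)"
        using kK by (intro divide_left_mono powr_mono) auto
      finally show ?thesis unfolding e_def by simp
    qed
    ultimately show ?thesis using c2 by linarith
  qed
  have e0: "e > 0" unfolding e_def by simp
  have prodb: "\<bar>rho N x\<bar> \<le> c ^ m"
  proof -
    have "\<bar>rho N x\<bar> = (\<Prod>n=1..N. \<bar>cos (pi * x / real n)\<bar>)" unfolding rho_def by (simp add: abs_prod)
    also have "\<dots> \<le> (\<Prod>n=1..N. (if n \<in> Bad then c else 1))"
    proof (intro prod_mono conjI)
      fix n assume "n \<in> {1..N}"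
      show "0 \<le> \<bar>cos (pi * x / real n)\<bar>" by simp
      show "\<bar>cos (pi * x / real n)\<bar> \<le> (if n \<in> Bad then c else 1)"
      proof (cases "n \<in> Bad")
        case True
        then have "\<forall>z::int. \<bar>x / real n - of_int z\<bar> > d" unfolding Bad_def by auto
        from cos_far[OF this] d0 have "\<bar>cos (pi * (x / real n))\<bar> \<le> c" unfolding c_def by simp
        then show ?thesis using True by simp
      qed simp
    qed
    also have "\<dots> = c ^ card ({1..N} \<inter> Bad)" by (simp add: prod.If_cases Int_commute)
    also have "{1..N} \<inter> Bad = Bad" unfolding Bad_def by auto
    finally show ?thesis unfolding m_def .
  qed
  also have "c ^ m \<le> (1 - e) ^ m" using c0 ce by (intro power_mono) auto
  also have "\<dots> \<le> exp (- e) ^ m" using e0 ce c0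
    by (intro power_mono) (auto simp: exp_ge_add_one_self[of "-e", simplified])
  also have "\<dots> = exp (- e * real m)" by (simp add: exp_of_nat_mult[symmetric] mult.commute)
  also have "\<dots> < exp (- 2 * ln x)"
  proof -
    have "e * (s / (4 * (K+1)^2) - 1) > L^2/50"
      using H3 unfolding e_def K_def s_def by (simp add: add.assoc)
    moreover have "e * real m \<ge> e * (s / (4 * (K+1)^2) - 1)"
      using mbound e0 by (intro mult_left_mono) auto
    moreover have "2 * ln x \<le> L^2/50" using lnx by simp
    ultimately show ?thesis by simp
  qed
  also have "\<dots> = 1 / x^2"
  proof -
    have "exp (2 * ln x) = exp (ln x)^2" using exp_of_nat_mult[of 2 "ln x"] by simp
    then have h: "exp (2 * ln x) = x^2" using xpos by simp
    have "exp (-2 * ln x) = exp (-(2 * ln x))" by simp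
    also have "\<dots> = inverse (exp (2 * ln x))" by (rule exp_minus)
    also have "\<dots> = 1 / x^2" using h by (simp add: inverse_eq_divide)
    finally show ?thesis .
  qed
  finally show ?thesis .
qed


theorem proposition3p2:
  shows "\<exists>C'>0. \<forall>\<^sub>F N in sequentially.
           \<forall>x::real. real N \<le> x \<and> x \<le> exp (C' * (ln (real N))^2) \<longrightarrow>
             \<bar>rho N x\<bar> < 1 / x^2"
proof (intro exI[of _ "1/100"] conjI)
  show "(0::real) < 1/100" by simp
  show "\<forall>\<^sub>F N in sequentially.
           \<forall>x::real. real N \<le> x \<and> x \<le> exp (1/100 * (ln (real N))^2) \<longrightarrow>
             \<bar>rho N x\<bar> < 1 / x^2"
    using asym1 asym2 asym3
  proof eventually_elim
    case (elim N)
    show ?case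
    proof (intro allI impI)
      fix x :: real
      assume "real N \<le> x \<and> x \<le> exp (1/100 * (ln (real N))^2)"
      then show "\<bar>rho N x\<bar> < 1 / x^2"
        using main_bound[of N x] elim by auto
    qed
  qed
qed

end
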